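(* Let $G=(V,E)$ and $G'=(V',E')$ be supply graphs having the strong uniqueness property with $V\cap V'=\{v\}$. Then their $1$-sum $G''=(V\cup V',E\cup E')$ has the strong uniqueness property.
   Context: A supply graph is a finite undirected graph (no loops, parallel edges allowed), with directed version replacing each edge by two opposite arcs. A demand digraph is a simple digraph $H=(T,L)$ with $T$ a subset of the vertex set; its arcs are OD-pairs; routes for $(o,d)\in L$ are directed $(o,d)$-paths in the directed version of the supply graph. Users form a bounded interval with Lebesgue measure, measurably partitioned by OD-pair; each user picks a route of his OD-pair (measurably); flow on an arc is the measure of users using it; users have nonnegative continuous strictly increasing arc cost functions (measurable in the user); an equilibrium is a profile where every user takes a minimal-cost route. $(G,H)$ has the uniqueness property if for every measurable partition of users into OD-pairs and every such cost assignment, the flow on each arc is the same in all equilibria. $G$ has the strong uniqueness property if $(G,H)$ has the uniqueness property for every demand digraph $H$ on a subset of its vertices. *)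

theory Defs
  imports "HOL-Analysis.Analysis"
begin

(* A supply graph: finite vertex set V, finite edge set E (abstract edge
   identifiers, so parallel edges are allowed), with an endpoint map ep.
   No loops. *)
definition supply_graph :: "'v set \<Rightarrow> 'e set \<Rightarrow> ('e \<Rightarrow> 'v \<times> 'v) \<Rightarrow> bool" where
  "supply_graph V E ep \<longleftrightarrow> finite V \<and> finite E \<and>
     (\<forall>e\<in>E. fst (ep e) \<in> V \<and> snd (ep e) \<in> V \<and> fst (ep e) \<noteq> snd (ep e))"

(* Directed version: each edge e gives two opposite arcs (e,True), (e,False). *)
definition arcs :: "'e set \<Rightarrow> ('e \<times> bool) set" where
  "arcs E = E \<times> UNIV"

definition arc_tail :: "('e \<Rightarrow> 'v \<times> 'v) \<Rightarrow> 'e \<times> bool \<Rightarrow> 'v" where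
  "arc_tail ep a = (if snd a then fst (ep (fst a)) else snd (ep (fst a)))"

definition arc_head :: "('e \<Rightarrow> 'v \<times> 'v) \<Rightarrow> 'e \<times> bool \<Rightarrow> 'v" where
  "arc_head ep a = (if snd a then snd (ep (fst a)) else fst (ep (fst a)))"

definition is_route :: "'e set \<Rightarrow> ('e \<Rightarrow> 'v \<times> 'v) \<Rightarrow> 'v \<Rightarrow> 'v \<Rightarrow> ('e \<times> bool) list \<Rightarrow> bool" where
  "is_route E ep s t P \<longleftrightarrow> P \<noteq> [] \<and> set P \<subseteq> arcs E \<and>
     arc_tail ep (hd P) = s \<and> arc_head ep (last P) = t \<and>
     (\<forall>i. Suc i < length P \<longrightarrow> arc_head ep (P ! i) = arc_tail ep (P ! Suc i)) \<and>
     distinct (s # map (arc_head ep) P)"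

definition demand_digraph :: "'v set \<Rightarrow> 'v set \<Rightarrow> ('v \<times> 'v) set \<Rightarrow> bool" where
  "demand_digraph V T L \<longleftrightarrow> T \<subseteq> V \<and> L \<subseteq> T \<times> T \<and> (\<forall>x. (x, x) \<notin> L)"

(* Users: a bounded interval I of reals with Lebesgue measure. *)
definition user_interval :: "real set \<Rightarrow> bool" where
  "user_interval I \<longleftrightarrow> is_interval I \<and> bounded I"

definition od_assignment :: "real set \<Rightarrow> ('v \<times> 'v) set \<Rightarrow> (real \<Rightarrow> 'v \<times> 'v) \<Rightarrow> bool" where
  "od_assignment I L od \<longleftrightarrow> (\<forall>x\<in>I. od x \<in> L) \<and>
     (\<forall>p\<in>L. {x\<in>I. od x = p} \<in> sets (lebesgue_on I))"

definition cost_assignment :: "real set \<Rightarrow> 'e set \<Rightarrow> (real \<Rightarrow> 'e \<times> bool \<Rightarrow> real \<Rightarrow> real) \<Rightarrow> bool" where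
  "cost_assignment I E c \<longleftrightarrow>
     (\<forall>x\<in>I. \<forall>a\<in>arcs E. (\<forall>t\<ge>0. c x a t \<ge> 0) \<and> continuous_on {0..} (c x a) \<and>
        strict_mono_on {0..} (c x a)) \<and>
     (\<forall>a\<in>arcs E. \<forall>t\<ge>0. (\<lambda>x. c x a t) \<in> borel_measurable (lebesgue_on I))"

definition strategy_profile :: "real set \<Rightarrow> 'e set \<Rightarrow> ('e \<Rightarrow> 'v \<times> 'v) \<Rightarrow> (real \<Rightarrow> 'v \<times> 'v)
     \<Rightarrow> (real \<Rightarrow> ('e \<times> bool) list) \<Rightarrow> bool" where
  "strategy_profile I E ep od \<sigma> \<longleftrightarrow>
     (\<forall>x\<in>I. is_route E ep (fst (od x)) (snd (od x)) (\<sigma> x)) \<and>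
     (\<forall>P. {x\<in>I. \<sigma> x = P} \<in> sets (lebesgue_on I))"

definition flow :: "real set \<Rightarrow> (real \<Rightarrow> ('e \<times> bool) list) \<Rightarrow> 'e \<times> bool \<Rightarrow> real" where
  "flow I \<sigma> a = measure (lebesgue_on I) {x\<in>I. a \<in> set (\<sigma> x)}"

definition route_cost :: "real set \<Rightarrow> (real \<Rightarrow> 'e \<times> bool \<Rightarrow> real \<Rightarrow> real) \<Rightarrow> (real \<Rightarrow> ('e \<times> bool) list)
     \<Rightarrow> real \<Rightarrow> ('e \<times> bool) list \<Rightarrow> real" where
  "route_cost I c \<sigma> x P = (\<Sum>a\<in>set P. c x a (flow I \<sigma> a))"

definition equilibrium :: "real set \<Rightarrow> 'e set \<Rightarrow> ('e \<Rightarrow> 'v \<times> 'v) \<Rightarrow> (real \<Rightarrow> 'v \<times> 'v)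
     \<Rightarrow> (real \<Rightarrow> 'e \<times> bool \<Rightarrow> real \<Rightarrow> real) \<Rightarrow> (real \<Rightarrow> ('e \<times> bool) list) \<Rightarrow> bool" where
  "equilibrium I E ep od c \<sigma> \<longleftrightarrow> strategy_profile I E ep od \<sigma> \<and>
     (\<forall>x\<in>I. \<forall>P. is_route E ep (fst (od x)) (snd (od x)) P \<longrightarrow>
         route_cost I c \<sigma> x (\<sigma> x) \<le> route_cost I c \<sigma> x P)"

definition uniqueness_property :: "'v set \<Rightarrow> 'e set \<Rightarrow> ('e \<Rightarrow> 'v \<times> 'v) \<Rightarrow> 'v set \<Rightarrow> ('v \<times> 'v) set \<Rightarrow> bool" where
  "uniqueness_property V E ep T L \<longleftrightarrow>
     (\<forall>I od c \<sigma> \<sigma>'. user_interval I \<longrightarrow> od_assignment I L od \<longrightarrow> cost_assignment I E c \<longrightarrow>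
        equilibrium I E ep od c \<sigma> \<longrightarrow> equilibrium I E ep od c \<sigma>' \<longrightarrow>
        (\<forall>a\<in>arcs E. flow I \<sigma> a = flow I \<sigma>' a))"

definition strong_uniqueness_property :: "'v set \<Rightarrow> 'e set \<Rightarrow> ('e \<Rightarrow> 'v \<times> 'v) \<Rightarrow> bool" where
  "strong_uniqueness_property V E ep \<longleftrightarrow>
     (\<forall>T L. demand_digraph V T L \<longrightarrow> uniqueness_property V E ep T L)"

end

theory Submission
  imports Defs
begin


fun walk :: "'e set \<Rightarrow> ('e \<Rightarrow> 'v \<times> 'v) \<Rightarrow> 'v \<Rightarrow> 'v \<Rightarrow> ('e \<times> bool) list \<Rightarrow> bool" where
  "walk E ep s t [] = False"
| "walk E ep s t [a] = (a \<in> arcs E \<and> arc_tail ep a = s \<and> arc_head ep a = t)"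
| "walk E ep s t (a # b # P) = (a \<in> arcs E \<and> arc_tail ep a = s \<and> walk E ep (arc_head ep a) t (b # P))"

definition ch :: "('e \<Rightarrow> 'v \<times> 'v) \<Rightarrow> ('e \<times> bool) list \<Rightarrow> bool" where
  "ch ep P \<longleftrightarrow> (\<forall>i. Suc i < length P \<longrightarrow> arc_head ep (P ! i) = arc_tail ep (P ! Suc i))"

lemma ch_Nil: "ch ep []" and ch_single: "ch ep [a]"
  unfolding ch_def by auto

lemma ch_Cons2: "ch ep (a # b # P) \<longleftrightarrow> arc_head ep a = arc_tail ep b \<and> ch ep (b # P)"
  (is "?L \<longleftrightarrow> ?R")
proof
  assume ?L
  then show ?R unfolding ch_def by (metis Suc_less_eq length_Cons nth_Cons_0 nth_Cons_Suc zero_less_Suc)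
next
  assume R: ?R
  show ?L unfolding ch_def
  proof (intro allI impI)
    fix i assume "Suc i < length (a # b # P)"
    then show "arc_head ep ((a # b # P) ! i) = arc_tail ep ((a # b # P) ! Suc i)"
      using R unfolding ch_def by (cases i) auto
  qed
qed

lemma chain_walk:
  "(P \<noteq> [] \<and> set P \<subseteq> arcs E \<and> arc_tail ep (hd P) = s \<and> arc_head ep (last P) = t \<and>
     ch ep P) \<longleftrightarrow> walk E ep s t P"
proof (induction E ep s t P rule: walk.induct)
  case (1 E ep s t) then show ?case by simp
next
  case (2 E ep s t a) then show ?case by (simp add: ch_single)
next
  case (3 E ep s t a b P)
  have e1: "last (a # b # P) = last (b # P)" by simp
  have e2: "hd (a#b#P) = a" "hd (b#P) = b" by simp_all
  have e3: "set (a # b # P) \<subseteq> arcs E \<longleftrightarrow> a \<in> arcs E \<and> set (b#P) \<subseteq> arcs E" by simp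
  have e4: "a # b # P \<noteq> []" "b # P \<noteq> []" by simp_all
  show ?case unfolding e1 e2 e3 walk.simps(3) ch_Cons2 using 3[unfolded e2] e4 by (metis (no_types))
qed

lemma route_walk: "is_route E ep s t P \<longleftrightarrow> walk E ep s t P \<and> distinct (s # map (arc_head ep) P)"
  unfolding is_route_def using chain_walk[of P E ep s t] unfolding ch_def by blast

lemma walk_append:
  "A \<noteq> [] \<Longrightarrow> B \<noteq> [] \<Longrightarrow> walk E ep s t (A @ B) \<longleftrightarrow>
     walk E ep s (arc_head ep (last A)) A \<and> walk E ep (arc_head ep (last A)) t B"
proof (induction A arbitrary: s)
  case Nil then show ?case by simp
next
  case (Cons a A)
  show ?case
  proof (cases "A = []")
    case True
    then show ?thesis using Cons.prems by (cases B) auto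
  next
    case False
    then obtain b A' where "A = b # A'" by (cases A) auto
    then show ?thesis using Cons False by auto
  qed
qed

lemma walk_set: "walk E ep s t P \<Longrightarrow> set P \<subseteq> arcs E"
  by (induction E ep s t P rule: walk.induct) auto

lemma walk_restrict: "walk E ep s t P \<Longrightarrow> set P \<subseteq> arcs E2 \<Longrightarrow> walk E2 ep s t P"
  by (induction E ep s t P rule: walk.induct) auto

lemma walk_nonempty: "walk E ep s t P \<Longrightarrow> P \<noteq> []"
  by (cases P) auto

lemma walk_last: "walk E ep s t P \<Longrightarrow> arc_head ep (last P) = t"
  by (induction E ep s t P rule: walk.induct) auto

lemma walk_hd: "walk E ep s t P \<Longrightarrow> arc_tail ep (hd P) = s"
  by (induction E ep s t P rule: walk.induct) auto

lemma arc_verts: "supply_graph V E ep \<Longrightarrow> a \<in> arcs E \<Longrightarrow> arc_tail ep a \<in> V \<and> arc_head ep a \<in> V"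
  unfolding supply_graph_def arcs_def arc_tail_def arc_head_def by auto

lemma walk_verts: "supply_graph V E ep \<Longrightarrow> walk E ep s t P \<Longrightarrow> s \<in> V \<and> t \<in> V \<and> set (map (arc_head ep) P) \<subseteq> V"
  by (induction E ep s t P rule: walk.induct) (auto dest: arc_verts)

lemma arcs_Un: "arcs (E \<union> E') = arcs E \<union> arcs E'"
  unfolding arcs_def by auto

lemma arcs_disj:
  assumes "supply_graph V E ep" "supply_graph V' E' ep" "V \<inter> V' = {v}"
  shows "arcs E \<inter> arcs E' = {}"
proof -
  have "E \<inter> E' = {}"
  proof (rule ccontr)
    assume "E \<inter> E' \<noteq> {}"
    then obtain e where "e \<in> E" "e \<in> E'" by auto
    then have "fst (ep e) \<in> V \<inter> V'" "snd (ep e) \<in> V \<inter> V'" "fst (ep e) \<noteq> snd (ep e)"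
      using assms unfolding supply_graph_def by auto
    then show False using assms(3) by auto
  qed
  then show ?thesis unfolding arcs_def by auto
qed


lemma walk_Cons_split:
  assumes "walk E ep s t (a # P)" "P \<noteq> []"
  shows "a \<in> arcs E \<and> arc_tail ep a = s \<and> walk E ep (arc_head ep a) t P"
  using assms by (cases P) auto

lemma decomp:
  assumes G: "supply_graph V E ep" and G': "supply_graph V' E' ep" and VV: "V \<inter> V' = {v}"
  shows "walk (E \<union> E') ep s t P \<Longrightarrow> distinct (s # map (arc_head ep) P) \<Longrightarrow>
    set P \<subseteq> arcs E \<or> set P \<subseteq> arcs E' \<or>
    (\<exists>A B. P = A @ B \<and> A \<noteq> [] \<and> B \<noteq> [] \<and> arc_head ep (last A) = v \<and>
       (set A \<subseteq> arcs E \<and> set B \<subseteq> arcs E' \<or> set A \<subseteq> arcs E' \<and> set B \<subseteq> arcs E))"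
proof (induction P arbitrary: s)
  case Nil then show ?case by simp
next
  case (Cons a P0)
  show ?case
  proof (cases "P0 = []")
    case True
    then have "a \<in> arcs E \<union> arcs E'" using Cons.prems by (simp add: arcs_Un)
    then show ?thesis using True by auto
  next
    case False
    from walk_Cons_split[OF Cons.prems(1) False]
    have a: "a \<in> arcs E \<union> arcs E'" and w0: "walk (E \<union> E') ep (arc_head ep a) t P0"
      by (auto simp: arcs_Un)
    have d0: "distinct (arc_head ep a # map (arc_head ep) P0)" using Cons.prems(2) by simp
    have ha: "arc_head ep a \<notin> set (map (arc_head ep) P0)" using d0 by simp
    have tl0: "arc_tail ep (hd P0) = arc_head ep a" using walk_hd[OF w0] .
    have hdin: "hd P0 \<in> set P0" using False by simp
    have junct: "arc_head ep a = v" if "a \<in> arcs E" "hd P0 \<in> arcs E'"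
      using arc_verts[OF G that(1)] arc_verts[OF G' that(2)] tl0 VV by auto
    have junct': "arc_head ep a = v" if "a \<in> arcs E'" "hd P0 \<in> arcs E"
      using arc_verts[OF G' that(1)] arc_verts[OF G that(2)] tl0 VV by auto
    from Cons.IH[OF w0 d0] show ?thesis
    proof (elim disjE)
      assume "set P0 \<subseteq> arcs E"
      note PE = this
      show ?thesis
      proof (cases "a \<in> arcs E")
        case True then show ?thesis using PE by simp
      next
        case aE: False
        then have "a \<in> arcs E'" using a by auto
        then have "arc_head ep a = v" using junct' PE hdin by auto
        then show ?thesis using PE \<open>a \<in> arcs E'\<close> False
          by (intro disjI2 exI[of _ "[a]"] exI[of _ P0]) simp
      qed
    next
      assume "set P0 \<subseteq> arcs E'"
      note PE = this
      show ?thesis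
      proof (cases "a \<in> arcs E'")
        case True then show ?thesis using PE by simp
      next
        case aE: False
        then have "a \<in> arcs E" using a by auto
        then have "arc_head ep a = v" using junct PE hdin by auto
        then show ?thesis using PE \<open>a \<in> arcs E\<close> False
          by (intro disjI2 exI[of _ "[a]"] exI[of _ P0]) simp
      qed
    next
      assume "\<exists>A B. P0 = A @ B \<and> A \<noteq> [] \<and> B \<noteq> [] \<and> arc_head ep (last A) = v \<and>
       (set A \<subseteq> arcs E \<and> set B \<subseteq> arcs E' \<or> set A \<subseteq> arcs E' \<and> set B \<subseteq> arcs E)"
      then obtain A B where P0: "P0 = A @ B" and A: "A \<noteq> []" "B \<noteq> []" and lv: "arc_head ep (last A) = v"
        and parts: "set A \<subseteq> arcs E \<and> set B \<subseteq> arcs E' \<or> set A \<subseteq> arcs E' \<and> set B \<subseteq> arcs E"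
        by blast
      have hdA: "hd P0 = hd A" "hd A \<in> set A" using P0 A by auto
      have lastin: "arc_head ep (last A) \<in> set (map (arc_head ep) P0)" using P0 A by auto
      have nv: "arc_head ep a \<noteq> v" using ha lastin lv by auto
      show ?thesis
      proof (cases "a \<in> arcs E")
        case True
        then have "set A \<subseteq> arcs E"
          using parts junct[OF True] nv hdA by auto
        then have "set (a # A) \<subseteq> arcs E \<and> set B \<subseteq> arcs E'"
          using parts True A arcs_disj[OF G G' VV] by (cases A) auto
        then show ?thesis using P0 A lv by (intro disjI2 exI[of _ "a # A"] exI[of _ B]) auto
      next
        case False
        then have aE': "a \<in> arcs E'" using a by auto
        then have "set A \<subseteq> arcs E'"
          using parts junct'[OF aE'] nv hdA by auto
        then have "set (a # A) \<subseteq> arcs E' \<and> set B \<subseteq> arcs E"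
          using parts aE' A arcs_disj[OF G G' VV] by (cases A) auto
        then show ?thesis using P0 A lv by (intro disjI2 exI[of _ "a # A"] exI[of _ B]) auto
      qed
    qed
  qed
qed


definition gv :: "'v set \<Rightarrow> 'v \<Rightarrow> 'v \<Rightarrow> 'v" where
  "gv V v y = (if y \<in> V then y else v)"

lemma route_mono: "is_route E ep s t P \<Longrightarrow> is_route (E \<union> E') ep s t P"
  unfolding is_route_def arcs_Un by auto

lemma route_mono2: "is_route E' ep s t P \<Longrightarrow> is_route (E \<union> E') ep s t P"
  unfolding is_route_def arcs_Un by auto

lemma restrict_route:
  assumes G: "supply_graph V E ep" and G': "supply_graph V' E' ep" and VV: "V \<inter> V' = {v}"
    and R: "is_route (E \<union> E') ep s t P"
  shows "(gv V v s \<noteq> gv V v t \<longrightarrow> is_route E ep (gv V v s) (gv V v t) (filter (\<lambda>a. a \<in> arcs E) P) \<and>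
            (\<forall>Q. is_route E ep (gv V v s) (gv V v t) Q \<longrightarrow>
               (\<exists>P'. is_route (E \<union> E') ep s t P' \<and> set P' = set Q \<union> (set P - arcs E))))
      \<and> (gv V v s = gv V v t \<longrightarrow> set P \<inter> arcs E = {})"
proof -
  have W: "walk (E \<union> E') ep s t P" and D: "distinct (s # map (arc_head ep) P)"
    using R by (auto simp: route_walk)
  have disj: "arcs E \<inter> arcs E' = {}" using arcs_disj[OF G G' VV] .
  have tin: "t \<in> set (map (arc_head ep) P)"
    using walk_last[OF W] walk_nonempty[OF W] by auto
  have snt: "s \<noteq> t" using D tin by auto
  from decomp[OF G G' VV W D] show ?thesis
  proof (elim disjE)
    assume PE: "set P \<subseteq> arcs E"
    have WE: "walk E ep s t P" using walk_restrict[OF W PE] .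
    have st: "s \<in> V" "t \<in> V" using walk_verts[OF G WE] by auto
    have g: "gv V v s = s" "gv V v t = t" using st by (auto simp: gv_def)
    have f: "filter (\<lambda>a. a \<in> arcs E) P = P" using PE by (intro filter_True) blast
    have rest: "set P - arcs E = {}" using PE by auto
    have rE: "is_route E ep s t P" using WE D by (simp add: route_walk)
    have "\<exists>P'. is_route (E \<union> E') ep s t P' \<and> set P' = set Q \<union> (set P - arcs E)"
      if "is_route E ep s t Q" for Q
      using that route_mono[OF that, of E'] unfolding rest by blast
    then show ?thesis
      unfolding g f using snt rE by blast
  next
    assume PE: "set P \<subseteq> arcs E'"
    have WE: "walk E' ep s t P" using walk_restrict[OF W PE] .
    have st: "s \<in> V'" "t \<in> V'" using walk_verts[OF G' WE] by auto
    have g: "gv V v s = v" "gv V v t = v" using st VV by (auto simp: gv_def)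
    show ?thesis unfolding g using PE disj by auto
  next
    assume "\<exists>A B. P = A @ B \<and> A \<noteq> [] \<and> B \<noteq> [] \<and> arc_head ep (last A) = v \<and>
       (set A \<subseteq> arcs E \<and> set B \<subseteq> arcs E' \<or> set A \<subseteq> arcs E' \<and> set B \<subseteq> arcs E)"
    then obtain A B where P: "P = A @ B" and A: "A \<noteq> []" "B \<noteq> []" and lv: "arc_head ep (last A) = v"
        and parts: "set A \<subseteq> arcs E \<and> set B \<subseteq> arcs E' \<or> set A \<subseteq> arcs E' \<and> set B \<subseteq> arcs E"
      by blast
    have WA: "walk (E \<union> E') ep s v A" and WB: "walk (E \<union> E') ep v t B"
      using walk_append[OF A, of "E \<union> E'" ep s t] W P lv by auto
    have DA: "distinct (s # map (arc_head ep) A)" and DB: "distinct (map (arc_head ep) B)"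
      and DAB: "set (s # map (arc_head ep) A) \<inter> set (map (arc_head ep) B) = {}"
      using D P by auto
    have vA: "v \<in> set (map (arc_head ep) A)" using lv A by auto
    have tB: "t \<in> set (map (arc_head ep) B)"
      using walk_last[OF WB] walk_nonempty[OF WB] by auto
    have sv: "s \<noteq> v" using DA vA by auto
    have tv: "t \<noteq> v" using DAB vA tB by auto
    have vB: "v \<notin> set (map (arc_head ep) B)" using DAB vA by auto
    from parts show ?thesis
    proof (elim disjE conjE)
      assume AE: "set A \<subseteq> arcs E" and BE: "set B \<subseteq> arcs E'"
      have WA': "walk E ep s v A" using walk_restrict[OF WA AE] .
      have WB': "walk E' ep v t B" using walk_restrict[OF WB BE] .
      have sV: "s \<in> V" using walk_verts[OF G WA'] by auto
      have tV': "t \<in> V'" and hB: "set (map (arc_head ep) B) \<subseteq> V'" using walk_verts[OF G' WB'] by auto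
      have tnV: "t \<notin> V" using tV' tv VV by auto
      have g: "gv V v s = s" "gv V v t = v" using sV tnV by (auto simp: gv_def)
      have fA: "filter (\<lambda>a. a \<in> arcs E) A = A" using AE by (intro filter_True) blast
      have fB: "filter (\<lambda>a. a \<in> arcs E) B = []" using BE disj by (auto simp: filter_empty_conv)
      have f: "filter (\<lambda>a. a \<in> arcs E) P = A" using fA fB P by simp
      have rest: "set P - arcs E = set B" using P AE BE disj by auto
      have r1: "is_route E ep s v A" using WA' DA by (simp add: route_walk)
      have r2: "is_route (E \<union> E') ep s t P'" if Q: "is_route E ep s v Q" and P': "P' = Q @ B" for Q P'
      proof -
        have WQ: "walk E ep s v Q" and DQ: "distinct (s # map (arc_head ep) Q)" using Q by (auto simp: route_walk)
        have Qne: "Q \<noteq> []" using walk_nonempty[OF WQ] .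
        have lQ: "arc_head ep (last Q) = v" using walk_last[OF WQ] .
        have WQ': "walk (E \<union> E') ep s v Q" using walk_restrict[OF WQ, of "E \<union> E'"] walk_set[OF WQ] by (auto simp: arcs_Un)
        have WB'': "walk (E \<union> E') ep v t B" using WB .
        have "walk (E \<union> E') ep s t (Q @ B)"
          using walk_append[OF Qne A(2), of "E \<union> E'" ep s t] WQ' WB'' lQ by simp
        moreover have "set (s # map (arc_head ep) Q) \<subseteq> V" using walk_verts[OF G WQ] by auto
        then have "set (s # map (arc_head ep) Q) \<inter> set (map (arc_head ep) B) = {}"
        proof -
          assume SQ: "set (s # map (arc_head ep) Q) \<subseteq> V"
          have "x \<notin> set (map (arc_head ep) B)" if "x \<in> set (s # map (arc_head ep) Q)" for x
          proof
            assume xB: "x \<in> set (map (arc_head ep) B)"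
            then have "x \<in> V'" using hB by auto
            moreover have "x \<in> V" using that SQ by auto
            ultimately have "x = v" using VV by auto
            then show False using xB vB by auto
          qed
          then show ?thesis by auto
        qed
        then have "distinct (s # map (arc_head ep) (Q @ B))" using DQ DB by auto
        ultimately show ?thesis unfolding P' by (simp add: route_walk)
      qed
      have "\<exists>P'. is_route (E \<union> E') ep s t P' \<and> set P' = set Q \<union> set B" if "is_route E ep s v Q" for Q
        using r2[OF that refl] by (intro exI[of _ "Q @ B"]) simp
      then show ?thesis unfolding g f rest using r1 sv by blast
    next
      assume AE: "set A \<subseteq> arcs E'" and BE: "set B \<subseteq> arcs E"
      have WA': "walk E' ep s v A" using walk_restrict[OF WA AE] .
      have WB': "walk E ep v t B" using walk_restrict[OF WB BE] .
      have sV': "s \<in> V'" and hA: "set (map (arc_head ep) A) \<subseteq> V'" using walk_verts[OF G' WA'] by auto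
      have tV: "t \<in> V" using walk_verts[OF G WB'] by auto
      have snV: "s \<notin> V" using sV' sv VV by auto
      have g: "gv V v s = v" "gv V v t = t" using snV tV by (auto simp: gv_def)
      have fA: "filter (\<lambda>a. a \<in> arcs E) A = []" using AE disj by (auto simp: filter_empty_conv)
      have fB: "filter (\<lambda>a. a \<in> arcs E) B = B" using BE by (intro filter_True) blast
      have f: "filter (\<lambda>a. a \<in> arcs E) P = B" using fA fB P by simp
      have rest: "set P - arcs E = set A" using P AE BE disj by auto
      have r1: "is_route E ep v t B" using WB' DB vB by (simp add: route_walk)
      have r2: "is_route (E \<union> E') ep s t P'" if Q: "is_route E ep v t Q" and P': "P' = A @ Q" for Q P'
      proof -
        have WQ: "walk E ep v t Q" and DQ: "distinct (v # map (arc_head ep) Q)" using Q by (auto simp: route_walk)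
        have Qne: "Q \<noteq> []" using walk_nonempty[OF WQ] .
        have WQ': "walk (E \<union> E') ep v t Q" using walk_restrict[OF WQ, of "E \<union> E'"] walk_set[OF WQ] by (auto simp: arcs_Un)
        have "walk (E \<union> E') ep s t (A @ Q)"
          using walk_append[OF A(1) Qne, of "E \<union> E'" ep s t] WQ' WA lv by simp
        moreover have hQ: "set (map (arc_head ep) Q) \<subseteq> V" using walk_verts[OF G WQ] by auto
        have "set (s # map (arc_head ep) A) \<inter> set (map (arc_head ep) Q) = {}"
        proof -
          have "x \<notin> set (map (arc_head ep) Q)" if "x \<in> set (s # map (arc_head ep) A)" for x
          proof
            assume xQ: "x \<in> set (map (arc_head ep) Q)"
            then have "x \<in> V" using hQ by auto
            moreover have "x \<in> V'" using that sV' hA by auto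
            ultimately have "x = v" using VV by auto
            then show False using xQ DQ by auto
          qed
          then show ?thesis by auto
        qed
        then have "distinct (s # map (arc_head ep) (A @ Q))" using DQ DA by auto
        ultimately show ?thesis unfolding P' by (simp add: route_walk)
      qed
      have "\<exists>P'. is_route (E \<union> E') ep s t P' \<and> set P' = set Q \<union> set A" if "is_route E ep v t Q" for Q
        using r2[OF that refl] by (intro exI[of _ "A @ Q"]) auto
      then show ?thesis unfolding g f rest using r1 tv by blast
    qed
  qed
qed



lemma ui_lmeas: "user_interval I \<Longrightarrow> I \<in> lmeasurable"
  unfolding user_interval_def by (simp add: is_interval_convex measurable_convex)

lemma ui_sets: "user_interval I \<Longrightarrow> I \<in> sets lebesgue"
  using ui_lmeas by (simp add: fmeasurableD)

lemma ui_fin: "user_interval I \<Longrightarrow> finite_measure (lebesgue_on I)"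
  using ui_lmeas finite_measure_lebesgue_on by blast

lemma meas_fin:
  assumes "finite S" "\<forall>x\<in>I. f x \<in> S" "\<forall>y\<in>S. {x\<in>I. f x = y} \<in> sets (lebesgue_on I)"
  shows "{x\<in>I. \<Phi> (f x)} \<in> sets (lebesgue_on I)"
proof -
  have "{x\<in>I. \<Phi> (f x)} = (\<Union>y\<in>{y\<in>S. \<Phi> y}. {x\<in>I. f x = y})" using assms(2) by auto
  moreover have "(\<Union>y\<in>{y\<in>S. \<Phi> y}. {x\<in>I. f x = y}) \<in> sets (lebesgue_on I)"
    using assms(1,3) by (intro sets.finite_UN) auto
  ultimately show ?thesis by simp
qed

lemma null_subset:
  assumes "user_interval I" "Z \<in> sets (lebesgue_on I)" "measure (lebesgue_on I) Z = 0" "A \<subseteq> Z"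
  shows "A \<in> sets (lebesgue_on I)"
proof -
  interpret finite_measure "lebesgue_on I" using ui_fin[OF assms(1)] .
  have ZI: "Z \<subseteq> I" using sets.sets_into_space[OF assms(2)] by (simp add: space_lebesgue_on)
  have "emeasure (lebesgue_on I) Z = 0" using assms(2,3) by (simp add: emeasure_eq_measure)
  then have "emeasure lebesgue Z = 0"
    using ZI ui_sets[OF assms(1)] assms(2) by (simp add: emeasure_restrict_space)
  moreover have "Z \<in> sets lebesgue"
    using ZI ui_sets[OF assms(1)] assms(2) by (simp add: sets_restrict_space_iff)
  ultimately have "Z \<in> null_sets lebesgue" by blast
  then have "A \<in> null_sets lebesgue" using null_sets_completion_subset assms(4) by blast
  then show ?thesis using assms(4) ZI ui_sets[OF assms(1)] by (auto simp add: sets_restrict_space_iff null_setsD2)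
qed

lemma null_of_measure0:
  assumes "user_interval I" "Z \<in> sets (lebesgue_on I)" "measure (lebesgue_on I) Z = 0"
  shows "Z \<in> null_sets (lebesgue_on I)"
proof -
  interpret finite_measure "lebesgue_on I" using ui_fin[OF assms(1)] .
  have "emeasure (lebesgue_on I) Z = 0" using assms(2,3) by (simp add: emeasure_eq_measure)
  then show ?thesis using assms(2) by blast
qed


definition fG :: "real \<Rightarrow> (real \<Rightarrow> real) \<Rightarrow> real \<Rightarrow> real \<Rightarrow> real" where
  "fG s0 f M t = (if t \<le> M + s0 then f 0 + (f s0 - f 0) * t / (M + s0) else f (t - M))"

lemma fG_props:
  assumes s0: "0 < s0" and M: "0 \<le> M" and nn: "\<forall>t\<ge>0. f t \<ge> 0"
    and ct: "continuous_on {0..} f" and sm: "strict_mono_on {0..} f"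
  shows "(\<forall>t\<ge>0. fG s0 f M t \<ge> 0) \<and> continuous_on {0..} (fG s0 f M) \<and> strict_mono_on {0..} (fG s0 f M)"
proof -
  have f01: "f 0 < f s0" using sm s0 by (auto simp: strict_mono_on_def)
  have Ms: "0 < M + s0" using s0 M by simp
  have nn2: "fG s0 f M t \<ge> 0" if "t \<ge> 0" for t
  proof (cases "t \<le> M + s0")
    case True
    have "0 \<le> (f s0 - f 0) * t / (M + s0)" using f01 that Ms by simp
    then show ?thesis using True nn by (simp add: fG_def)
  next
    case False
    then have "t - M \<ge> 0" using s0 by simp
    then show ?thesis using nn False by (simp add: fG_def)
  qed
  have ct2: "continuous_on {0..} (fG s0 f M)"
    unfolding fG_def
  proof (rule continuous_on_cases_1)
    show "continuous_on {t \<in> {0..}. t \<le> M + s0} (\<lambda>t. f 0 + (f s0 - f 0) * t / (M + s0))"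
      using Ms by (intro continuous_intros) auto
    have "continuous_on {t \<in> {0::real..}. M + s0 \<le> t} (\<lambda>t. t - M)" by (intro continuous_intros)
    moreover have "(\<lambda>t. t - M) ` {t \<in> {0::real..}. M + s0 \<le> t} \<subseteq> {0..}" using s0 by auto
    ultimately show "continuous_on {t \<in> {0..}. M + s0 \<le> t} (\<lambda>t. f (t - M))"
      using continuous_on_compose2[OF ct] by blast
    show "M + s0 \<in> {0..} \<Longrightarrow> f 0 + (f s0 - f 0) * (M + s0) / (M + s0) = f (M + s0 - M)"
      using Ms by simp
  qed
  have sm2: "strict_mono_on {0..} (fG s0 f M)"
  proof (rule strict_mono_onI)
    fix r t :: real assume r: "r \<in> {0..}" and t: "t \<in> {0..}" and rt: "r < t"
    show "fG s0 f M r < fG s0 f M t"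
    proof (cases "t \<le> M + s0")
      case True
      then have "r \<le> M + s0" using rt by simp
      moreover have "(f s0 - f 0) * r / (M + s0) < (f s0 - f 0) * t / (M + s0)"
        using f01 rt Ms by (simp add: divide_strict_right_mono)
      ultimately show ?thesis using True by (simp add: fG_def)
    next
      case False
      show ?thesis
      proof (cases "r \<le> M + s0")
        case True
        have "(f s0 - f 0) * r / (M + s0) \<le> (f s0 - f 0) * (M + s0) / (M + s0)"
          using f01 True Ms by (intro divide_right_mono mult_left_mono) auto
        then have "fG s0 f M r \<le> f s0" using True Ms by (simp add: fG_def)
        also have "f s0 < f (t - M)" using sm False s0 by (auto simp: strict_mono_on_def)
        finally show ?thesis using False by (simp add: fG_def)
      next
        case False2: False
        then show ?thesis using False sm rt s0 M by (auto simp: fG_def strict_mono_on_def)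
      qed
    qed
  qed
  show ?thesis using nn2 ct2 sm2 by blast
qed

lemma fG_eq:
  assumes "0 < s0" "0 \<le> M" "s0 \<le> F"
  shows "fG s0 f M (M + F) = f F"
proof (cases "F = s0")
  case True
  then show ?thesis using assms by (simp add: fG_def)
next
  case False
  then show ?thesis using assms by (simp add: fG_def)
qed

lemma fG_ge:
  assumes "0 < s0" "0 \<le> M" "f 0 \<le> f s0"
  shows "f 0 \<le> fG s0 f M (M + 0)"
proof -
  have "0 \<le> (f s0 - f 0) * M / (M + s0)" using assms by simp
  then show ?thesis using assms by (simp add: fG_def)
qed



lemma route_len:
  assumes "is_route E ep s t P" "finite E"
  shows "P \<in> {P. set P \<subseteq> arcs E \<and> length P \<le> card (arcs E)}"
proof -
  have d: "distinct (map (arc_head ep) P)" and sP: "set P \<subseteq> arcs E" using assms(1) unfolding is_route_def by auto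
  have "distinct P" using d by (simp add: distinct_map)
  moreover have "finite (arcs E)" using assms(2) unfolding arcs_def by simp
  ultimately have "length P \<le> card (arcs E)"
    using sP by (metis card_mono distinct_card)
  then show ?thesis using sP by simp
qed

lemma finite_routes_set: "finite E \<Longrightarrow> finite {P. set P \<subseteq> arcs E \<and> length P \<le> card (arcs E)}"
  by (rule finite_lists_length_le) (simp add: arcs_def)

locale onesum =
  fixes V V' :: "'v set" and E E' :: "'e set" and ep :: "'e \<Rightarrow> 'v \<times> 'v" and v :: 'v
    and T :: "'v set" and L :: "('v \<times> 'v) set" and I :: "real set" and od :: "real \<Rightarrow> 'v \<times> 'v"
    and c :: "real \<Rightarrow> 'e \<times> bool \<Rightarrow> real \<Rightarrow> real" and e0 :: 'e and s0 :: real
  assumes G: "supply_graph V E ep" and G': "supply_graph V' E' ep" and VV: "V \<inter> V' = {v}"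
    and H: "demand_digraph (V \<union> V') T L" and UI: "user_interval I"
    and OD: "od_assignment I L od" and C: "cost_assignment I (E \<union> E') c"
    and e0: "e0 \<in> E" and s0: "0 < s0"
begin

definition "u = fst (ep e0)"
definition "w = snd (ep e0)"
definition "a0 = (e0, True)"
definition rel :: "'v \<times> 'v \<Rightarrow> bool" where "rel p \<longleftrightarrow> gv V v (fst p) \<noteq> gv V v (snd p)"
definition gp :: "'v \<times> 'v \<Rightarrow> 'v \<times> 'v" where "gp p = (gv V v (fst p), gv V v (snd p))"
definition odG :: "real \<Rightarrow> 'v \<times> 'v" where "odG x = (if rel (od x) then gp (od x) else (u, w))"
definition LG :: "('v \<times> 'v) set" where "LG = gp ` {p\<in>L. rel p} \<union> {(u, w)}"
definition N :: "real set" where "N = {x\<in>I. \<not> rel (od x)}"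
definition m :: real where "m = measure (lebesgue_on I) N"
definition mp :: "'e \<times> bool \<Rightarrow> real" where "mp a = (if a = a0 then m else 0)"
definition pad :: "'e \<times> bool \<Rightarrow> real \<Rightarrow> real" where
  "pad a t = (if a = a0 then t / (1 + t) else 1 + t)"
definition cG :: "real \<Rightarrow> 'e \<times> bool \<Rightarrow> real \<Rightarrow> real" where
  "cG x a t = (if rel (od x) then fG s0 (c x a) (mp a) t else pad a t)"

lemma fin_E: "finite E" and fin_E': "finite E'" and fin_V: "finite V" and fin_V': "finite V'"
  using G G' unfolding supply_graph_def by auto

lemma fin_L: "finite L"
proof -
  have "L \<subseteq> (V \<union> V') \<times> (V \<union> V')" using H unfolding demand_digraph_def by auto
  then show ?thesis using fin_V fin_V' by (meson finite_SigmaI finite_UnI finite_subset)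
qed

lemma od_in: "x \<in> I \<Longrightarrow> od x \<in> L" using OD unfolding od_assignment_def by auto

lemma od_meas: "\<forall>p\<in>L. {x\<in>I. od x = p} \<in> sets (lebesgue_on I)"
  using OD unfolding od_assignment_def by auto

lemma meas_od: "{x\<in>I. \<Phi> (od x)} \<in> sets (lebesgue_on I)"
  by (rule meas_fin[OF fin_L]) (use od_in od_meas in auto)

lemma N_sets: "N \<in> sets (lebesgue_on I)" unfolding N_def by (rule meas_od)

lemma m_nonneg: "0 \<le> m" unfolding m_def by simp

lemma mp_nonneg: "0 \<le> mp a" unfolding mp_def using m_nonneg by simp

lemma v_in: "v \<in> V" using VV by auto

lemma gv_in: "gv V v y \<in> V" using v_in unfolding gv_def by auto

lemma a0_arc: "a0 \<in> arcs E" using e0 unfolding a0_def arcs_def by auto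

lemma a0_ends: "arc_tail ep a0 = u" "arc_head ep a0 = w"
  unfolding a0_def arc_tail_def arc_head_def u_def w_def by auto

lemma uw: "u \<in> V" "w \<in> V" "u \<noteq> w"
  using G e0 unfolding supply_graph_def u_def w_def by auto

lemma a0_route: "is_route E ep u w [a0]"
  unfolding is_route_def using a0_arc a0_ends uw by auto

lemma demand_G: "demand_digraph V V LG"
  unfolding demand_digraph_def LG_def gp_def rel_def using gv_in uw by auto

lemma odG_in: "x \<in> I \<Longrightarrow> odG x \<in> LG"
  unfolding odG_def LG_def using od_in by auto

lemma od_assign_G: "od_assignment I LG odG"
  unfolding od_assignment_def
proof (intro conjI ballI)
  fix x assume "x \<in> I" then show "odG x \<in> LG" by (rule odG_in)
next
  fix q assume "q \<in> LG"
  have "{x\<in>I. odG x = q} = {x\<in>I. (if rel (od x) then gp (od x) else (u, w)) = q}"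
    unfolding odG_def by simp
  also have "\<dots> \<in> sets (lebesgue_on I)" by (rule meas_od)
  finally show "{x\<in>I. odG x = q} \<in> sets (lebesgue_on I)" .
qed

lemma pad_props: "(\<forall>t\<ge>0. pad a t \<ge> 0) \<and> continuous_on {0..} (pad a) \<and> strict_mono_on {0..} (pad a)"
proof (cases "a = a0")
  case True
  have "continuous_on {0::real..} (\<lambda>t. t / (1 + t))" by (intro continuous_intros) auto
  moreover have "strict_mono_on {0::real..} (\<lambda>t. t / (1 + t))"
  proof (rule strict_mono_onI)
    fix r t :: real assume "r \<in> {0..}" "t \<in> {0..}" "r < t"
    then show "r / (1 + r) < t / (1 + t)" by (simp add: field_simps)
  qed
  ultimately show ?thesis using True unfolding pad_def by auto
next
  case False
  have "continuous_on {0::real..} (\<lambda>t. 1 + t)" by (intro continuous_intros)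
  moreover have "strict_mono_on {0::real..} (\<lambda>t. 1 + t)" by (rule strict_mono_onI) auto
  ultimately show ?thesis using False unfolding pad_def by auto
qed

lemma c_props: "x \<in> I \<Longrightarrow> a \<in> arcs E \<Longrightarrow>
   (\<forall>t\<ge>0. c x a t \<ge> 0) \<and> continuous_on {0..} (c x a) \<and> strict_mono_on {0..} (c x a)"
  using C unfolding cost_assignment_def arcs_Un by auto

lemma c_meas: "a \<in> arcs E \<Longrightarrow> t \<ge> 0 \<Longrightarrow> (\<lambda>x. c x a t) \<in> borel_measurable (lebesgue_on I)"
  using C unfolding cost_assignment_def arcs_Un by auto

lemma cost_assign_G: "cost_assignment I E cG"
  unfolding cost_assignment_def
proof (rule conjI)
  show "\<forall>x\<in>I. \<forall>a\<in>arcs E. (\<forall>t\<ge>0. cG x a t \<ge> 0) \<and> continuous_on {0..} (cG x a) \<and> strict_mono_on {0..} (cG x a)"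
  proof (intro ballI)
  fix x a assume x: "x \<in> I" and a: "a \<in> arcs E"
  show "(\<forall>t\<ge>0. cG x a t \<ge> 0) \<and> continuous_on {0..} (cG x a) \<and> strict_mono_on {0..} (cG x a)"
  proof (cases "rel (od x)")
    case True
    then have "cG x a = fG s0 (c x a) (mp a)" unfolding cG_def by (simp add: fun_eq_iff)
    then show ?thesis using fG_props[OF s0 mp_nonneg] c_props[OF x a] by metis
  next
    case False
    then have "cG x a = pad a" unfolding cG_def by (simp add: fun_eq_iff)
    then show ?thesis using pad_props by metis
  qed
  qed
next
  show "\<forall>a\<in>arcs E. \<forall>t\<ge>0. (\<lambda>x. cG x a t) \<in> borel_measurable (lebesgue_on I)"
  proof (intro ballI allI impI)
next
  fix a and t :: real assume a: "a \<in> arcs E" and t: "0 \<le> t"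
  have f1: "(\<lambda>x. fG s0 (c x a) (mp a) t) \<in> borel_measurable (lebesgue_on I)"
  proof (cases "t \<le> mp a + s0")
    case True
    then have "(\<lambda>x. fG s0 (c x a) (mp a) t) = (\<lambda>x. c x a 0 + (c x a s0 - c x a 0) * t / (mp a + s0))"
      by (simp add: fG_def)
    moreover have "(\<lambda>x. c x a 0 + (c x a s0 - c x a 0) * t / (mp a + s0)) \<in> borel_measurable (lebesgue_on I)"
      using c_meas[OF a, of 0] c_meas[OF a, of s0] s0 by (intro borel_measurable_add borel_measurable_times borel_measurable_divide borel_measurable_diff measurable_const) auto
    ultimately show ?thesis by simp
  next
    case False
    then have "(\<lambda>x. fG s0 (c x a) (mp a) t) = (\<lambda>x. c x a (t - mp a))"
      by (simp add: fG_def)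
    moreover have "t - mp a \<ge> 0" using False s0 by simp
    ultimately show ?thesis using c_meas[OF a] by simp
  qed
  have "(\<lambda>x. if x \<in> {x. rel (od x)} then fG s0 (c x a) (mp a) t else pad a t) \<in> borel_measurable (lebesgue_on I)"
  proof (rule measurable_If_set[OF f1])
    have "{x. rel (od x)} \<inter> space (lebesgue_on I) = {x\<in>I. rel (od x)}" by (auto simp: space_lebesgue_on)
    then show "{x. rel (od x)} \<inter> space (lebesgue_on I) \<in> sets (lebesgue_on I)" using meas_od by simp
  qed simp
  then show "(\<lambda>x. cG x a t) \<in> borel_measurable (lebesgue_on I)" unfolding cG_def by simp
  qed
qed

definition rc :: "real \<Rightarrow> ('e \<times> bool \<Rightarrow> real) \<Rightarrow> ('e \<times> bool) list \<Rightarrow> real" where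
  "rc x fl P = (\<Sum>a\<in>set P. cG x a (fl a))"
definition best :: "('e \<times> bool \<Rightarrow> real) \<Rightarrow> real \<Rightarrow> ('e \<times> bool) list" where
  "best fl x = (SOME P. is_route E ep (fst (odG x)) (snd (odG x)) P \<and>
      (\<forall>Q. is_route E ep (fst (odG x)) (snd (odG x)) Q \<longrightarrow> rc x fl P \<le> rc x fl Q))"
definition Zs :: "(real \<Rightarrow> ('e \<times> bool) list) \<Rightarrow> real set" where
  "Zs \<tau> = {x\<in>I. \<exists>a\<in>arcs E. flow I \<tau> a = 0 \<and> a \<in> set (\<tau> x)}"
definition \<sigma>G :: "(real \<Rightarrow> ('e \<times> bool) list) \<Rightarrow> real \<Rightarrow> ('e \<times> bool) list" where
  "\<sigma>G \<tau> x = (if \<not> rel (od x) then [a0] else if x \<in> Zs \<tau> then best (\<lambda>a. mp a + flow I \<tau> a) x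
      else filter (\<lambda>a. a \<in> arcs E) (\<tau> x))"

lemma odG_rel: "rel (od x) \<Longrightarrow> odG x = gp (od x)" unfolding odG_def by simp
lemma odG_nrel: "\<not> rel (od x) \<Longrightarrow> odG x = (u, w)" unfolding odG_def by simp

lemma routes_E_finite: "finite {P. is_route E ep s t P}"
proof (rule finite_subset[OF _ finite_routes_set[OF fin_E]])
  show "{P. is_route E ep s t P} \<subseteq> {P. set P \<subseteq> arcs E \<and> length P \<le> card (arcs E)}"
  proof
    fix P assume "P \<in> {P. is_route E ep s t P}"
    then have "is_route E ep s t P" by simp
    from route_len[OF this fin_E] show "P \<in> {P. set P \<subseteq> arcs E \<and> length P \<le> card (arcs E)}" .
  qed
qed

lemma exists_route_G: "x \<in> I \<Longrightarrow> \<exists>P. is_route E ep (fst (odG x)) (snd (odG x)) P \<Longrightarrow>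
    is_route E ep (fst (odG x)) (snd (odG x)) (best fl x) \<and>
      (\<forall>Q. is_route E ep (fst (odG x)) (snd (odG x)) Q \<longrightarrow> rc x fl (best fl x) \<le> rc x fl Q)"
proof -
  assume "\<exists>P. is_route E ep (fst (odG x)) (snd (odG x)) P"
  let ?S = "{P. is_route E ep (fst (odG x)) (snd (odG x)) P}"
  have fin: "finite ?S" by (rule routes_E_finite)
  have ne: "?S \<noteq> {}" using \<open>\<exists>P. _\<close> by auto
  define M where "M = Min (rc x fl ` ?S)"
  have "M \<in> rc x fl ` ?S" unfolding M_def using fin ne by (intro Min_in) auto
  then obtain P where P: "P \<in> ?S" "rc x fl P = M" by auto
  have "\<forall>Q\<in>?S. M \<le> rc x fl Q" unfolding M_def using fin by auto
  then have "\<exists>P. is_route E ep (fst (odG x)) (snd (odG x)) P \<and>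
      (\<forall>Q. is_route E ep (fst (odG x)) (snd (odG x)) Q \<longrightarrow> rc x fl P \<le> rc x fl Q)"
    using P by auto
  then show ?thesis unfolding best_def by (rule someI_ex)
qed

context
  fixes \<tau> :: "real \<Rightarrow> ('e \<times> bool) list"
  assumes EQ: "equilibrium I (E \<union> E') ep od c \<tau>"
    and gap: "\<forall>a\<in>arcs E. flow I \<tau> a = 0 \<or> s0 \<le> flow I \<tau> a"
begin

lemma tau_route: "x \<in> I \<Longrightarrow> is_route (E \<union> E') ep (fst (od x)) (snd (od x)) (\<tau> x)"
  using EQ unfolding equilibrium_def strategy_profile_def by auto

lemma tau_meas: "{x\<in>I. \<tau> x = P} \<in> sets (lebesgue_on I)"
  using EQ unfolding equilibrium_def strategy_profile_def by auto

lemma tau_opt: "x \<in> I \<Longrightarrow> is_route (E \<union> E') ep (fst (od x)) (snd (od x)) P \<Longrightarrow>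
   route_cost I c \<tau> x (\<tau> x) \<le> route_cost I c \<tau> x P"
  using EQ unfolding equilibrium_def by auto

definition "RT = {P. set P \<subseteq> arcs (E \<union> E') \<and> length P \<le> card (arcs (E \<union> E'))}"

lemma fin_EE: "finite (E \<union> E')" using fin_E fin_E' by simp

lemma RT_fin: "finite RT" unfolding RT_def by (rule finite_routes_set[OF fin_EE])

lemma tau_RT: "x \<in> I \<Longrightarrow> \<tau> x \<in> RT"
  unfolding RT_def by (rule route_len[OF tau_route fin_EE])

lemma meas_pair: "{x\<in>I. \<Phi> (od x) (\<tau> x)} \<in> sets (lebesgue_on I)"
proof -
  have "{x\<in>I. (\<lambda>(p, P). \<Phi> p P) (od x, \<tau> x)} \<in> sets (lebesgue_on I)"
  proof (rule meas_fin[of "L \<times> RT"])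
    show "finite (L \<times> RT)" using fin_L RT_fin by simp
    show "\<forall>x\<in>I. (od x, \<tau> x) \<in> L \<times> RT" using od_in tau_RT by auto
    show "\<forall>y\<in>L \<times> RT. {x \<in> I. (od x, \<tau> x) = y} \<in> sets (lebesgue_on I)"
    proof
      fix y assume "y \<in> L \<times> RT"
      obtain p P where y: "y = (p, P)" by (cases y)
      have "{x \<in> I. (od x, \<tau> x) = y} = {x\<in>I. od x = p} \<inter> {x\<in>I. \<tau> x = P}" using y by auto
      then show "{x \<in> I. (od x, \<tau> x) = y} \<in> sets (lebesgue_on I)"
        using meas_od tau_meas by auto
    qed
  qed
  then show ?thesis by simp
qed

lemma flow_set_meas: "{x\<in>I. a \<in> set (\<tau> x)} \<in> sets (lebesgue_on I)"
  using meas_pair[of "\<lambda>p P. a \<in> set P"] by simp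

lemma Z_sets: "Zs \<tau> \<in> sets (lebesgue_on I)"
  unfolding Zs_def using meas_pair[of "\<lambda>p P. \<exists>a\<in>arcs E. flow I \<tau> a = 0 \<and> a \<in> set P"] by simp

lemma Z_null: "measure (lebesgue_on I) (Zs \<tau>) = 0"
proof -
  let ?A = "{a\<in>arcs E. flow I \<tau> a = 0}"
  have fA: "finite ?A" using fin_E unfolding arcs_def by simp
  have eq: "Zs \<tau> = (\<Union>a\<in>?A. {x\<in>I. a \<in> set (\<tau> x)})" unfolding Zs_def by auto
  have "measure (lebesgue_on I) (Zs \<tau>) \<le> (\<Sum>a\<in>?A. measure (lebesgue_on I) {x\<in>I. a \<in> set (\<tau> x)})"
    unfolding eq by (rule measure_UNION_le[OF fA]) (rule flow_set_meas)
  also have "\<dots> = 0" by (intro sum.neutral) (auto simp: flow_def)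
  finally show ?thesis using measure_nonneg[of "lebesgue_on I" "Zs \<tau>"] by linarith
qed

lemma rel_info:
  assumes x: "x \<in> I" and r: "rel (od x)"
  shows "is_route E ep (fst (odG x)) (snd (odG x)) (filter (\<lambda>a. a \<in> arcs E) (\<tau> x)) \<and>
    (\<forall>Q. is_route E ep (fst (odG x)) (snd (odG x)) Q \<longrightarrow>
      (\<exists>P'. is_route (E \<union> E') ep (fst (od x)) (snd (od x)) P' \<and> set P' = set Q \<union> (set (\<tau> x) - arcs E)))"
  using restrict_route[OF G G' VV tau_route[OF x]] r
  unfolding odG_rel[OF r] gp_def rel_def by simp

lemma nrel_info:
  assumes x: "x \<in> I" and r: "\<not> rel (od x)"
  shows "set (\<tau> x) \<inter> arcs E = {}"
  using restrict_route[OF G G' VV tau_route[OF x]] r unfolding rel_def by simp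

lemma sG_route: "x \<in> I \<Longrightarrow> is_route E ep (fst (odG x)) (snd (odG x)) (\<sigma>G \<tau> x)"
proof -
  assume x: "x \<in> I"
  show ?thesis
  proof (cases "rel (od x)")
    case False
    then show ?thesis using a0_route unfolding \<sigma>G_def odG_nrel[OF False] by simp
  next
    case True
    note ri = rel_info[OF x True]
    show ?thesis
    proof (cases "x \<in> Zs \<tau>")
      case True2: True
      have "\<exists>P. is_route E ep (fst (odG x)) (snd (odG x)) P" using ri by blast
      from exists_route_G[OF x this] show ?thesis unfolding \<sigma>G_def using True True2 by simp
    next
      case False
      then show ?thesis using ri True unfolding \<sigma>G_def by simp
    qed
  qed
qed

lemma sG_meas: "{x\<in>I. \<Phi> (\<sigma>G \<tau> x)} \<in> sets (lebesgue_on I)"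
proof -
  have eq: "{x\<in>I. \<Phi> (\<sigma>G \<tau> x)} =
     ({x\<in>I. \<Phi> (if \<not> rel (od x) then [a0] else filter (\<lambda>a. a \<in> arcs E) (\<tau> x))} - Zs \<tau>)
     \<union> {x\<in>Zs \<tau>. \<Phi> (\<sigma>G \<tau> x)}"
    unfolding \<sigma>G_def Zs_def by auto
  have "{x\<in>I. \<Phi> (if \<not> rel (od x) then [a0] else filter (\<lambda>a. a \<in> arcs E) (\<tau> x))} \<in> sets (lebesgue_on I)"
    by (rule meas_pair)
  moreover have "{x\<in>Zs \<tau>. \<Phi> (\<sigma>G \<tau> x)} \<in> sets (lebesgue_on I)"
    by (rule null_subset[OF UI Z_sets Z_null]) auto
  ultimately show ?thesis unfolding eq using Z_sets by auto
qed

lemma sG_flow: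
  assumes a: "a \<in> arcs E"
  shows "flow I (\<sigma>G \<tau>) a = mp a + flow I \<tau> a"
proof -
  interpret finite_measure "lebesgue_on I" using ui_fin[OF UI] .
  let ?S = "{x\<in>I. a \<in> set (\<sigma>G \<tau> x)}"
  let ?S1 = "{x\<in>I. a \<in> set (\<tau> x)}"
  let ?N' = "if a = a0 then N else {}"
  have Zn: "Zs \<tau> \<in> null_sets (lebesgue_on I)" by (rule null_of_measure0[OF UI Z_sets Z_null])
  have S: "?S \<in> sets (lebesgue_on I)" by (rule sG_meas)
  have S1: "?S1 \<in> sets (lebesgue_on I)" by (rule flow_set_meas)
  have N': "?N' \<in> sets (lebesgue_on I)" using N_sets by simp
  have eqs: "?S - Zs \<tau> = (?S1 \<union> ?N') - Zs \<tau>"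
  proof (intro set_eqI iffI)
    fix x assume xS: "x \<in> ?S - Zs \<tau>"
    then have x: "x \<in> I" and xZ: "x \<notin> Zs \<tau>" by auto
    show "x \<in> (?S1 \<union> ?N') - Zs \<tau>"
    proof (cases "rel (od x)")
      case True
      then show ?thesis using xS unfolding \<sigma>G_def by auto
    next
      case False
      then have "a = a0" using xS unfolding \<sigma>G_def by auto
      then show ?thesis using xS False unfolding N_def by auto
    qed
  next
    fix x assume xS: "x \<in> (?S1 \<union> ?N') - Zs \<tau>"
    then have x: "x \<in> I" and xZ: "x \<notin> Zs \<tau>" by (auto simp: N_def split: if_splits)
    show "x \<in> ?S - Zs \<tau>"
    proof (cases "rel (od x)")
      case True
      then have "x \<in> ?S1" using xS unfolding N_def by (auto split: if_splits)
      then show ?thesis using True x xZ a unfolding \<sigma>G_def by auto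
    next
      case False
      have "x \<notin> ?S1" using nrel_info[OF x False] a by auto
      then have "a = a0" using xS by (auto split: if_splits)
      then show ?thesis using False x xZ unfolding \<sigma>G_def by auto
    qed
  qed
  have disj: "?S1 \<inter> ?N' = {}" using nrel_info a unfolding N_def by auto
  have "flow I (\<sigma>G \<tau>) a = measure (lebesgue_on I) ?S" unfolding flow_def by simp
  also have "\<dots> = measure (lebesgue_on I) (?S - Zs \<tau>)" using measure_Diff_null_set[OF S Zn] by simp
  also have "\<dots> = measure (lebesgue_on I) ((?S1 \<union> ?N') - Zs \<tau>)" using eqs by simp
  also have "\<dots> = measure (lebesgue_on I) (?S1 \<union> ?N')" using S1 N' Zn by (simp add: measure_Diff_null_set)
  also have "\<dots> = measure (lebesgue_on I) ?S1 + measure (lebesgue_on I) ?N'"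
    using finite_measure_Union[OF S1 N' disj] .
  also have "\<dots> = flow I \<tau> a + mp a" unfolding flow_def mp_def m_def by simp
  finally show ?thesis by simp
qed

lemma flow_nonneg: "0 \<le> flow I \<tau>' a" unfolding flow_def by simp

lemma cG_ge:
  assumes x: "x \<in> I" and r: "rel (od x)" and a: "a \<in> arcs E"
  shows "c x a (flow I \<tau> a) \<le> cG x a (mp a + flow I \<tau> a)"
    and "flow I \<tau> a \<noteq> 0 \<Longrightarrow> cG x a (mp a + flow I \<tau> a) = c x a (flow I \<tau> a)"
proof -
  have sm: "strict_mono_on {0..} (c x a)" using c_props[OF x a] by blast
  have c01: "c x a 0 \<le> c x a s0" using sm s0 by (auto simp: strict_mono_on_def less_imp_le)
  have cG: "cG x a t = fG s0 (c x a) (mp a) t" for t unfolding cG_def using r by simp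
  show "cG x a (mp a + flow I \<tau> a) = c x a (flow I \<tau> a)" if "flow I \<tau> a \<noteq> 0"
  proof -
    have "s0 \<le> flow I \<tau> a" using gap a that by auto
    then show ?thesis using fG_eq[OF s0 mp_nonneg] cG by simp
  qed
  show "c x a (flow I \<tau> a) \<le> cG x a (mp a + flow I \<tau> a)"
  proof (cases "flow I \<tau> a = 0")
    case True
    then show ?thesis using fG_ge[OF s0 mp_nonneg c01] cG by simp
  next
    case False
    then have "s0 \<le> flow I \<tau> a" using gap a by auto
    then show ?thesis using fG_eq[OF s0 mp_nonneg] cG by simp
  qed
qed

lemma rc_route_cost:
  assumes "set P \<subseteq> arcs E"
  shows "route_cost I cG (\<sigma>G \<tau>) x P = rc x (\<lambda>a. mp a + flow I \<tau> a) P"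
  unfolding route_cost_def rc_def using assms sG_flow by (intro sum.cong) auto

lemma cG_nonneg: "x \<in> I \<Longrightarrow> a \<in> arcs E \<Longrightarrow> 0 \<le> t \<Longrightarrow> 0 \<le> cG x a t"
  using cost_assign_G unfolding cost_assignment_def by blast

lemma equilibrium_G: "equilibrium I E ep odG cG (\<sigma>G \<tau>)"
  unfolding equilibrium_def strategy_profile_def
proof (intro conjI ballI allI impI)
  fix x assume "x \<in> I" then show "is_route E ep (fst (odG x)) (snd (odG x)) (\<sigma>G \<tau> x)" by (rule sG_route)
next
  fix P show "{x \<in> I. \<sigma>G \<tau> x = P} \<in> sets (lebesgue_on I)" by (rule sG_meas)
next
  fix x Q assume x: "x \<in> I" and Q: "is_route E ep (fst (odG x)) (snd (odG x)) Q"
  let ?fl = "\<lambda>a. mp a + flow I \<tau> a"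
  have QE: "set Q \<subseteq> arcs E" using Q unfolding is_route_def by auto
  have PE: "set (\<sigma>G \<tau> x) \<subseteq> arcs E" using sG_route[OF x] unfolding is_route_def by auto
  have fl_nn: "0 \<le> ?fl a" for a using mp_nonneg[of a] flow_nonneg[of \<tau> a] by simp
  have "rc x ?fl (\<sigma>G \<tau> x) \<le> rc x ?fl Q"
  proof (cases "rel (od x)")
    case False
    have s: "\<sigma>G \<tau> x = [a0]" unfolding \<sigma>G_def using False by simp
    have lhs: "rc x ?fl [a0] = ?fl a0 / (1 + ?fl a0)" unfolding rc_def cG_def pad_def using False by simp
    have lt1: "?fl a0 / (1 + ?fl a0) < 1" using fl_nn[of a0] by simp
    show ?thesis
    proof (cases "set Q = {a0}")
      case True
      then show ?thesis unfolding s rc_def by simp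
    next
      case False2: False
      have "Q \<noteq> []" using Q unfolding is_route_def by auto
      have "\<exists>b\<in>set Q. b \<noteq> a0"
      proof (rule ccontr)
        assume "\<not> (\<exists>b\<in>set Q. b \<noteq> a0)"
        then have "set Q \<subseteq> {a0}" by auto
        moreover have "set Q \<noteq> {}" using \<open>Q \<noteq> []\<close> by simp
        ultimately have "set Q = {a0}" by (metis subset_singletonD)
        then show False using False2 by simp
      qed
      then obtain b where b: "b \<in> set Q" "b \<noteq> a0" by blast
      have cb: "cG x b (?fl b) = 1 + ?fl b" unfolding cG_def pad_def using False b by simp
      have "cG x b (?fl b) \<le> rc x ?fl Q" unfolding rc_def
      proof (rule member_le_sum[OF b(1)])
        fix y assume "y \<in> set Q - {b}"
        then have "y \<in> arcs E" using QE by auto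
        then show "0 \<le> cG x y (?fl y)" using cG_nonneg[OF x _ fl_nn] by blast
      qed simp
      then show ?thesis unfolding s lhs using lt1 fl_nn[of b] cb by simp
    qed
  next
    case True
    note ri = rel_info[OF x True]
    show ?thesis
    proof (cases "x \<in> Zs \<tau>")
      case True2: True
      have "\<exists>P. is_route E ep (fst (odG x)) (snd (odG x)) P" using ri by blast
      from exists_route_G[OF x this, of ?fl] Q show ?thesis unfolding \<sigma>G_def using True True2 by simp
    next
      case False
      let ?P = "filter (\<lambda>a. a \<in> arcs E) (\<tau> x)"
      have s: "\<sigma>G \<tau> x = ?P" unfolding \<sigma>G_def using True False by simp
      have setP: "set ?P = set (\<tau> x) \<inter> arcs E" by auto
      have nz: "flow I \<tau> a \<noteq> 0" if "a \<in> set (\<tau> x) \<inter> arcs E" for a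
        using False that x unfolding Zs_def by auto
      have A: "rc x ?fl ?P = (\<Sum>a\<in>set (\<tau> x) \<inter> arcs E. c x a (flow I \<tau> a))"
        unfolding rc_def setP using cG_ge(2)[OF x True] nz by (intro sum.cong) auto
      have B: "(\<Sum>a\<in>set Q. c x a (flow I \<tau> a)) \<le> rc x ?fl Q"
        unfolding rc_def using cG_ge(1)[OF x True] QE by (intro sum_mono) auto
      obtain P' where P': "is_route (E \<union> E') ep (fst (od x)) (snd (od x)) P'"
        and sP': "set P' = set Q \<union> (set (\<tau> x) - arcs E)" using ri Q by blast
      have opt: "route_cost I c \<tau> x (\<tau> x) \<le> route_cost I c \<tau> x P'" by (rule tau_opt[OF x P'])
      let ?R = "(\<Sum>a\<in>set (\<tau> x) - arcs E. c x a (flow I \<tau> a))"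
      have r1: "route_cost I c \<tau> x (\<tau> x) = (\<Sum>a\<in>set (\<tau> x) \<inter> arcs E. c x a (flow I \<tau> a)) + ?R"
      proof -
        have "set (\<tau> x) = (set (\<tau> x) \<inter> arcs E) \<union> (set (\<tau> x) - arcs E)" by auto
        then have "route_cost I c \<tau> x (\<tau> x) = (\<Sum>a\<in>(set (\<tau> x) \<inter> arcs E) \<union> (set (\<tau> x) - arcs E). c x a (flow I \<tau> a))"
          unfolding route_cost_def by simp
        also have "\<dots> = (\<Sum>a\<in>set (\<tau> x) \<inter> arcs E. c x a (flow I \<tau> a)) + ?R"
          by (rule sum.union_disjoint) auto
        finally show ?thesis .
      qed
      have r2: "route_cost I c \<tau> x P' = (\<Sum>a\<in>set Q. c x a (flow I \<tau> a)) + ?R"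
        unfolding route_cost_def sP' using QE by (intro sum.union_disjoint) auto
      show ?thesis unfolding s A using opt r1 r2 B by linarith
    qed
  qed
  then show "route_cost I cG (\<sigma>G \<tau>) x (\<sigma>G \<tau> x) \<le> route_cost I cG (\<sigma>G \<tau>) x Q"
    using rc_route_cost[OF PE] rc_route_cost[OF QE] by simp
qed

end

end

lemma half:
  assumes G: "supply_graph V E ep" and G': "supply_graph V' E' ep" and VV: "V \<inter> V' = {v}"
    and SU: "strong_uniqueness_property V E ep"
    and H: "demand_digraph (V \<union> V') T L" and UI: "user_interval I"
    and OD: "od_assignment I L od" and C: "cost_assignment I (E \<union> E') c"
    and EQ1: "equilibrium I (E \<union> E') ep od c \<sigma>" and EQ2: "equilibrium I (E \<union> E') ep od c \<sigma>'"
  shows "\<forall>a\<in>arcs E. flow I \<sigma> a = flow I \<sigma>' a"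
proof (cases "E = {}")
  case True
  then show ?thesis unfolding arcs_def by simp
next
  case False
  then obtain e0 where e0: "e0 \<in> E" by auto
  have finA: "finite (arcs E)" using G unfolding supply_graph_def arcs_def by simp
  define pos where "pos = ((flow I \<sigma> ` arcs E) \<union> (flow I \<sigma>' ` arcs E) \<union> {1}) \<inter> {0<..}"
  define s0 where "s0 = Min pos"
  have fpos: "finite pos" unfolding pos_def using finA by simp
  have "1 \<in> pos" unfolding pos_def by simp
  then have "s0 \<in> pos" unfolding s0_def using fpos by (intro Min_in) auto
  then have s0: "0 < s0" unfolding pos_def by auto
  have gap: "\<forall>a\<in>arcs E. flow I \<tau> a = 0 \<or> s0 \<le> flow I \<tau> a" if "\<tau> = \<sigma> \<or> \<tau> = \<sigma>'" for \<tau>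
  proof
    fix a assume a: "a \<in> arcs E"
    have nn: "0 \<le> flow I \<tau> a" unfolding flow_def by simp
    show "flow I \<tau> a = 0 \<or> s0 \<le> flow I \<tau> a"
    proof (cases "flow I \<tau> a = 0")
      case False
      then have "flow I \<tau> a \<in> pos" unfolding pos_def using nn a that by auto
      then show ?thesis unfolding s0_def using fpos by simp
    qed simp
  qed
  interpret onesum V V' E E' ep v T L I od c e0 s0
    using G G' VV H UI OD C e0 s0 by unfold_locales
  have U: "uniqueness_property V E ep V LG" using SU demand_G unfolding strong_uniqueness_property_def by blast
  have "\<forall>a\<in>arcs E. flow I (\<sigma>G \<sigma>) a = flow I (\<sigma>G \<sigma>') a"
    using U UI od_assign_G cost_assign_G equilibrium_G[OF EQ1 gap] equilibrium_G[OF EQ2 gap]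
    unfolding uniqueness_property_def by blast
  then show ?thesis using sG_flow[OF EQ1 gap] sG_flow[OF EQ2 gap] by simp
qed

theorem lemma2:
  fixes V V' :: "'v set" and E E' :: "'e set" and ep :: "'e \<Rightarrow> 'v \<times> 'v" and v :: 'v
  assumes "supply_graph V E ep" and "supply_graph V' E' ep"
    and "strong_uniqueness_property V E ep" and "strong_uniqueness_property V' E' ep"
    and "V \<inter> V' = {v}"
  shows "strong_uniqueness_property (V \<union> V') (E \<union> E') ep"
  unfolding strong_uniqueness_property_def uniqueness_property_def
proof (intro allI impI)
  fix T L I od c \<sigma> \<sigma>'
  assume H: "demand_digraph (V \<union> V') T L" and UI: "user_interval I"
    and OD: "od_assignment I L od" and C: "cost_assignment I (E \<union> E') c"
    and EQ1: "equilibrium I (E \<union> E') ep od c \<sigma>" and EQ2: "equilibrium I (E \<union> E') ep od c \<sigma>'"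
  have h1: "\<forall>a\<in>arcs E. flow I \<sigma> a = flow I \<sigma>' a"
    by (rule half[OF assms(1,2,5,3) H UI OD C EQ1 EQ2])
  have VV': "V' \<inter> V = {v}" using assms(5) by auto
  have H': "demand_digraph (V' \<union> V) T L" using H by (simp add: Un_commute)
  have C': "cost_assignment I (E' \<union> E) c" using C by (simp add: Un_commute)
  have EQ1': "equilibrium I (E' \<union> E) ep od c \<sigma>" using EQ1 by (simp add: Un_commute)
  have EQ2': "equilibrium I (E' \<union> E) ep od c \<sigma>'" using EQ2 by (simp add: Un_commute)
  have h2: "\<forall>a\<in>arcs E'. flow I \<sigma> a = flow I \<sigma>' a"
    by (rule half[OF assms(2,1) VV' assms(4) H' UI OD C' EQ1' EQ2'])
  show "\<forall>a\<in>arcs (E \<union> E'). flow I \<sigma> a = flow I \<sigma>' a" using h1 h2 unfolding arcs_Un by blast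
qed

end
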